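(* Let $f\in C(\mathbb{R}^2)$ be $\kappa$-Lipschitz and $\mathbb{Z}^2$-periodic; let $v(\tau;c)$ solve $\dot v=f(v,\tau)$, $v(0)=c$, and let $\bar f=\lim_{k\to\infty}v(k;0)/k$. Then for all $\tau>0$ and $c\in\mathbb{R}$, $|v(\tau;c)-(c+\bar f\tau)|\le 1+2\|f\|_\infty$. Moreover, if $f(r,\tau)$ is independent of $\tau$, then $|v(\tau;c)-(c+\bar f\tau)|\le 1$. *)

theory Defs
  imports "HOL-Analysis.Analysis"
begin

definition sup_norm :: "(real \<times> real \<Rightarrow> real) \<Rightarrow> real" where
  "sup_norm f = (SUP p. \<bar>f p\<bar>)"

end

theory Submission
  imports Defs
begin

lemma eps_le:
  fixes x a C :: real
  assumes "\<And>k::nat. k \<ge> 1 \<Longrightarrow> x \<le> a + C / real k"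
  shows "x \<le> a"
proof (rule ccontr)
  assume "\<not> x \<le> a"
  then have d: "x - a > 0" by simp
  obtain k :: nat where k: "real k > \<bar>C\<bar> / (x - a)" using reals_Archimedean2 by blast
  have k1: "k \<ge> 1"
  proof (rule ccontr)
    assume "\<not> k \<ge> 1" then have "k = 0" by simp
    with k d show False by (simp add: divide_less_0_iff)
  qed
  have kp: "real k > 0" using k1 by simp
  have "\<bar>C\<bar> < real k * (x - a)" using k d by (simp add: pos_divide_less_eq mult.commute)
  then have "C / real k < x - a" using kp by (simp add: divide_less_eq mult.commute) 
  with assms[OF k1] show False by linarith
qed

lemma uniq:
  fixes f :: "real \<times> real \<Rightarrow> real" and x y :: "real \<Rightarrow> real"
  assumes L: "\<And>a b t. \<bar>f (a,t) - f (b,t)\<bar> \<le> K * \<bar>a - b\<bar>" and K: "K \<ge> 0"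
    and dx: "\<And>t. (x has_real_derivative f (x t, t)) (at t)"
    and dy: "\<And>t. (y has_real_derivative f (y t, t)) (at t)"
    and eq: "x s = y s" and st: "s \<le> t"
  shows "x t = y t"
proof -
  define w where "w u = (x u - y u)^2 * exp (-2*K*u)" for u
  have "w t \<le> w s"
  proof (rule DERIV_nonpos_imp_nonincreasing[OF st])
    fix u
    have D: "(w has_real_derivative
        (2*(x u - y u)*(f (x u,u) - f (y u,u))*exp(-2*K*u) + (x u - y u)^2*(exp(-2*K*u) * (-2*K)))) (at u)"
      unfolding w_def
      by (auto intro!: derivative_eq_intros dx dy)
    have "(x u - y u)*(f (x u,u) - f (y u,u)) \<le> \<bar>x u - y u\<bar> * \<bar>f (x u,u) - f (y u,u)\<bar>"
      by (metis abs_ge_self abs_mult)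
    also have "\<dots> \<le> \<bar>x u - y u\<bar> * (K * \<bar>x u - y u\<bar>)" by (rule mult_left_mono[OF L]) simp
    also have "\<dots> = K * (x u - y u)^2" by (simp add: power2_eq_square abs_mult_self_eq)
    finally have "(x u - y u)*(f (x u,u) - f (y u,u)) \<le> K * (x u - y u)^2" .
    then have "2*(x u - y u)*(f (x u,u) - f (y u,u))*exp(-2*K*u) + (x u - y u)^2*(exp(-2*K*u) * (-2*K)) \<le> 0"
    proof -
      assume h: "(x u - y u)*(f (x u,u) - f (y u,u)) \<le> K * (x u - y u)^2"
      have "2*(x u - y u)*(f (x u,u) - f (y u,u))*exp(-2*K*u) + (x u - y u)^2*(exp(-2*K*u) * (-2*K))
          = 2*exp(-2*K*u) * ((x u - y u)*(f (x u,u) - f (y u,u)) - K * (x u - y u)^2)" by (simp add: algebra_simps)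
      also have "\<dots> \<le> 0" using h by (intro mult_nonneg_nonpos) auto
      finally show ?thesis .
    qed
    with D show "\<exists>y. (w has_real_derivative y) (at u) \<and> y \<le> 0" by blast
  qed
  moreover have "w s = 0" using eq by (simp add: w_def)
  moreover have "w t \<ge> 0" by (simp add: w_def)
  ultimately have "w t = 0" by simp
  then show ?thesis by (simp add: w_def)
qed


lemma transl_int:
  fixes G :: "real \<Rightarrow> real"
  assumes T: "\<And>x. G (x + 1) = G x + 1"
  shows "G (x + of_int z) = G x + of_int z"
proof -
  have n: "G (x + real n) = G x + real n" for x n
  proof (induction n)
    case 0 then show ?case by simp
  next
    case (Suc n)
    have "G (x + real (Suc n)) = G ((x + real n) + 1)" by (simp add: ac_simps)
    also have "\<dots> = G (x + real n) + 1" by (rule T)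
    finally have "G (x + real (Suc n)) = G (x + real n) + 1" .
    then show ?case using Suc by simp
  qed
  show ?thesis
  proof (cases "z \<ge> 0")
    case True
    then obtain n where "z = int n" by (metis nonneg_eq_int)
    then show ?thesis using n by simp
  next
    case False
    define n where "n = nat (- z)"
    have z: "z = - int n" using False by (simp add: n_def)
    have "G (x - real n + real n) = G (x - real n) + real n" by (rule n)
    then show ?thesis using z by simp
  qed
qed

lemma circ_osc:
  fixes G :: "real \<Rightarrow> real"
  assumes M: "mono G" and T: "\<And>x. G (x + 1) = G x + 1"
  shows "\<bar>(G y - y) - (G x - x)\<bar> \<le> 1"
proof -
  define z where "z = \<lfloor>y - x\<rfloor>"
  define y' where "y' = y - of_int z"
  have y1: "x \<le> y'" "y' < x + 1" unfolding y'_def z_def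
    using floor_le_iff[of "y - x"] by linarith+
  have Gy: "G y = G y' + of_int z" using transl_int[of G, OF T, of y' z] by (simp add: y'_def)
  have "G x \<le> G y'" "G y' \<le> G (x + 1)" using y1 M by (auto simp: mono_def)
  then have "G x \<le> G y'" "G y' \<le> G x + 1" using T by auto
  then show ?thesis using Gy y1 unfolding y'_def abs_le_iff by linarith
qed

lemma circ_iter:
  fixes G :: "real \<Rightarrow> real"
  assumes M: "mono G" and T: "\<And>x. G (x + 1) = G x + 1"
  shows "\<bar>real k * (G c - c) - (G ^^ k) 0\<bar> \<le> real k"
proof (induction k)
  case 0 then show ?case by simp
next
  case (Suc k)
  let ?z = "(G ^^ k) 0"
  have "\<bar>(G ?z - ?z) - (G c - c)\<bar> \<le> 1" by (rule circ_osc[OF M T])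
  moreover have "(G ^^ Suc k) 0 = ?z + (G ?z - ?z)" by simp
  ultimately show ?case using Suc unfolding abs_le_iff of_nat_Suc distrib_right mult.left_neutral by linarith
qed


context
  fixes f :: "real \<times> real \<Rightarrow> real" and v :: "real \<Rightarrow> real \<Rightarrow> real" and K B :: real
  assumes L: "\<And>a b t. \<bar>f (a,t) - f (b,t)\<bar> \<le> K * \<bar>a - b\<bar>" and K: "K \<ge> 0"
    and Bd: "\<And>p. \<bar>f p\<bar> \<le> B"
    and per1: "\<And>r t. f (r + 1, t) = f (r, t)"
    and init: "\<And>c. v c 0 = c"
    and ode: "\<And>c t. (v c has_real_derivative f (v c t, t)) (at t)"
begin

lemma v_tr: "t \<ge> 0 \<Longrightarrow> v (c+1) t = v c t + 1"
proof -
  assume t: "t \<ge> 0"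
  have d: "((\<lambda>t. v c t + 1) has_real_derivative f (v c t + 1, t)) (at t)" for t
    using ode[of c t] per1[of "v c t" t] by (auto intro!: derivative_eq_intros)
  show ?thesis
    by (rule uniq[where f=f and x="v (c+1)" and y="\<lambda>t. v c t + 1" and s=0, OF L K ode d]) (use init t in auto)
qed

lemma v_mono: "c \<le> d \<Longrightarrow> t \<ge> 0 \<Longrightarrow> v c t \<le> v d t"
proof (rule ccontr)
  assume cd: "c \<le> d" and t: "t \<ge> 0" and n: "\<not> v c t \<le> v d t"
  have "\<exists>s\<ge>0. s \<le> t \<and> (\<lambda>u. v d u - v c u) s = 0"
  proof (rule IVT2)
    show "\<forall>x. 0 \<le> x \<and> x \<le> t \<longrightarrow> isCont (\<lambda>u. v d u - v c u) x"
      using ode[THEN DERIV_isCont] by (auto intro!: continuous_intros)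
  qed (use cd t n init in auto)
  then obtain s where s: "s \<le> t" "v d s = v c s" by auto
  have "v d t = v c t" by (rule uniq[OF L K ode ode s(2) s(1)])
  with n show False by simp
qed

lemma v_sg:
  assumes P: "\<And>r u. f (r, u + s) = f (r, u)" and t: "t \<ge> 0"
  shows "v c (t + s) = v (v c s) t"
proof -
  have d: "((\<lambda>t. v c (t + s)) has_real_derivative f (v c (t + s), t)) (at t)" for t
    using ode[of c "t+s"] P[of "v c (t + s)" t] DERIV_shift by metis
  show ?thesis
    by (rule uniq[where f=f and x="\<lambda>t. v c (t + s)" and y="v (v c s)" and s=0, OF L K d ode]) (use init t in auto)
qed

lemma v_lb: "\<bar>v c t - v c s\<bar> \<le> B * \<bar>t - s\<bar>"
proof -
  have *: "\<bar>v c b - v c a\<bar> \<le> B * (b - a)" if ab: "a < b" for a b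
  proof -
    obtain z where "v c b - v c a = (b - a) * f (v c z, z)"
      using MVT2[OF ab, of "v c" "\<lambda>z. f (v c z, z)"] ode by auto
    then have "\<bar>v c b - v c a\<bar> = (b - a) * \<bar>f (v c z, z)\<bar>" using ab by (simp add: abs_mult)
    also have "\<dots> \<le> (b - a) * B" using ab Bd by (intro mult_left_mono) auto
    finally show ?thesis by (simp add: mult.commute)
  qed
  consider "s < t" | "s = t" | "t < s" by linarith
  then show ?thesis
  proof cases
    case 1 then show ?thesis using *[OF 1] by simp
  next
    case 2 then show ?thesis by simp
  next
    case 3 then show ?thesis using *[OF 3] by (simp add: abs_minus_commute)
  qed
qed

lemma v_iter:
  assumes T: "T \<ge> 0" and P: "\<And>k::nat. \<And>r u. f (r, u + real k * T) = f (r, u)"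
  shows "((\<lambda>c. v c T) ^^ k) 0 = v 0 (real k * T)"
proof (induction k)
  case 0 then show ?case by (simp add: init)
next
  case (Suc k)
  have "v 0 (T + real k * T) = v (v 0 (real k * T)) T" by (rule v_sg[OF P T])
  then show ?case using Suc by (simp add: algebra_simps)
qed

lemma v_M:
  assumes T: "T \<ge> 0" and P: "\<And>k::nat. \<And>r u. f (r, u + real k * T) = f (r, u)"
  shows "\<bar>real k * (v c T - c) - v 0 (real k * T)\<bar> \<le> real k"
proof -
  have M: "mono (\<lambda>c. v c T)" using v_mono T by (auto simp: mono_def)
  have Tr: "\<And>x. v (x + 1) T = v x T + 1" using v_tr T by auto
  show ?thesis using circ_iter[of "\<lambda>c. v c T", OF M Tr, of k c] v_iter[OF T P, of k] by simp
qed

end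



lemma rho_seq:
  fixes a :: "nat \<Rightarrow> real"
  assumes a0: "a 0 = 0" and Q: "\<And>k m. \<bar>real k * a m - a (k*m)\<bar> \<le> real k"
  shows "convergent (\<lambda>n. a n / real n)" and "\<And>n. \<bar>a n - real n * lim (\<lambda>n. a n / real n)\<bar> \<le> 1"
proof -
  have half: "\<bar>a n / real n - a (m*n) / real (m*n)\<bar> \<le> 1 / real n" if "n \<ge> 1" "m \<ge> 1" for n m
  proof -
    have mp: "real m > 0" "real n > 0" using that by auto
    have "\<bar>real m * a n - a (m*n)\<bar> \<le> real m" by (rule Q)
    then have "\<bar>real m * a n - a (m*n)\<bar> / (real m * real n) \<le> real m / (real m * real n)"
      using mp by (intro divide_right_mono) auto
    moreover have "\<bar>real m * a n - a (m*n)\<bar> / (real m * real n) = \<bar>a n / real n - a (m*n) / real (m*n)\<bar>"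
      using mp by (simp add: abs_div_pos[symmetric] field_simps)
    moreover have "real m / (real m * real n) = 1 / real n" using mp by simp
    ultimately show ?thesis by simp
  qed
  have Cb: "\<bar>a n / real n - a m / real m\<bar> \<le> 1 / real n + 1 / real m" if "n \<ge> 1" "m \<ge> 1" for n m
    using half[OF that] half[of m n] that by (simp add: mult.commute abs_le_iff)
  show conv: "convergent (\<lambda>n. a n / real n)"
    unfolding Cauchy_convergent_iff[symmetric] Cauchy_def
  proof (intro allI impI)
    fix e :: real assume e: "e > 0"
    obtain N :: nat where N: "real N > 2 / e" using reals_Archimedean2 by blast
    have N1: "N \<ge> 1"
    proof (rule ccontr)
      assume "\<not> N \<ge> 1" then have "N = 0" by simp
      moreover have "2 / e > 0" using e by simp
      ultimately show False using N by simp
    qed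
    have Np: "real N > 0" using N1 by simp
    have "2 / real N < e" using N e Np by (simp add: divide_less_eq mult.commute)
    show "\<exists>M. \<forall>m\<ge>M. \<forall>n\<ge>M. dist (a m / real m) (a n / real n) < e"
    proof (intro exI allI impI)
      fix m n assume m: "m \<ge> N" and n: "n \<ge> N"
      have "1 / real m \<le> 1 / real N" "1 / real n \<le> 1 / real N" using m n Np by (auto intro!: divide_left_mono)
      then have "1 / real m + 1 / real n < e" using \<open>2 / real N < e\<close> by simp
      then show "dist (a m / real m) (a n / real n) < e" using Cb[of m n] m n N1 by (simp add: dist_real_def)
    qed
  qed
  define L where "L = lim (\<lambda>n. a n / real n)"
  have lim: "(\<lambda>n. a n / real n) \<longlonglongrightarrow> L" using conv by (simp add: L_def convergent_LIMSEQ_iff)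
  fix n :: nat
  show "\<bar>a n - real n * L\<bar> \<le> 1"
  proof (cases "n = 0")
    case True then show ?thesis by (simp add: a0)
  next
    case False
    then have n1: "n \<ge> 1" by simp
    have "\<bar>a n / real n - L\<bar> \<le> 1 / real n"
    proof (rule tendsto_le[OF sequentially_bot])
      show "(\<lambda>m. 1 / real n + 1 / real m) \<longlonglongrightarrow> 1 / real n"
        using tendsto_add[OF tendsto_const lim_const_over_n[of 1]] by simp
      show "(\<lambda>m. \<bar>a n / real n - a m / real m\<bar>) \<longlonglongrightarrow> \<bar>a n / real n - L\<bar>"
        by (intro tendsto_intros lim)
      show "\<forall>\<^sub>F m in sequentially. \<bar>a n / real n - a m / real m\<bar> \<le> 1 / real n + 1 / real m"
        by (rule eventually_sequentiallyI[of 1]) (rule Cb[OF n1])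
    qed
    then have "\<bar>a n - real n * L\<bar> / real n \<le> 1 / real n" using n1 by (simp add: abs_div_pos[symmetric] field_simps)
    then show ?thesis using n1 by (simp add: divide_le_cancel)
  qed
qed


lemma per_int:
  fixes g :: "real \<Rightarrow> 'b"
  assumes T: "\<And>x. g (x + 1) = g x"
  shows "g (x + of_int z) = g x"
proof -
  have n: "g (x + real n) = g x" for x n
  proof (induction n)
    case 0 then show ?case by simp
  next
    case (Suc n)
    have "g (x + real (Suc n)) = g ((x + real n) + 1)" by (simp add: ac_simps)
    also have "\<dots> = g (x + real n)" by (rule T)
    finally show ?case using Suc by simp
  qed
  show ?thesis
  proof (cases "z \<ge> 0")
    case True
    then obtain n where "z = int n" by (metis nonneg_eq_int)
    then show ?thesis using n by simp
  next
    case False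
    define n where "n = nat (- z)"
    have z: "z = - int n" using False by (simp add: n_def)
    have "g (x - real n + real n) = g (x - real n)" by (rule n)
    then show ?thesis using z by simp
  qed
qed

lemma divk:
  fixes y C :: real
  assumes "k \<ge> 1" "real k * y \<le> real k + C"
  shows "y \<le> 1 + C / real k"
proof -
  have kp: "real k > 0" using assms by simp
  have "y \<le> (real k + C) / real k" using assms kp by (simp add: le_divide_eq mult.commute)
  also have "\<dots> = 1 + C / real k" using kp by (simp add: add_divide_distrib)
  finally show ?thesis .
qed

lemma tri3:
  fixes x p q r P Q R :: real
  assumes "x = p + q - r" "\<bar>p\<bar> \<le> P" "\<bar>q\<bar> \<le> Q" "\<bar>r\<bar> \<le> R"
  shows "\<bar>x\<bar> \<le> P + Q + R"
  using assms by (simp add: abs_le_iff)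

lemma tri4:
  fixes x p q r u P Q R U :: real
  assumes "x = p + q + u - r" "\<bar>p\<bar> \<le> P" "\<bar>q\<bar> \<le> Q" "\<bar>u\<bar> \<le> U" "\<bar>r\<bar> \<le> R"
  shows "\<bar>x\<bar> \<le> P + Q + U + R"
  using assms by (simp add: abs_le_iff)

theorem lemma2p4:
  fixes f :: "real \<times> real \<Rightarrow> real" and \<kappa> :: real
    and v :: "real \<Rightarrow> real \<Rightarrow> real"
  assumes cont: "continuous_on UNIV f"
    and lip: "\<kappa>-lipschitz_on UNIV f"
    and per1: "\<And>r t. f (r + 1, t) = f (r, t)"
    and per2: "\<And>r t. f (r, t + 1) = f (r, t)"
    and init: "\<And>c. v c 0 = c"
    and ode: "\<And>c t. (v c has_real_derivative f (v c t, t)) (at t)"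
  shows "(\<forall>\<tau>>0. \<forall>c. \<bar>v c \<tau> - (c + lim (\<lambda>k::nat. v 0 (real k) / real k) * \<tau>)\<bar>
            \<le> 1 + 2 * sup_norm f)
       \<and> ((\<forall>r t s. f (r, t) = f (r, s)) \<longrightarrow>
          (\<forall>\<tau>>0. \<forall>c. \<bar>v c \<tau> - (c + lim (\<lambda>k::nat. v 0 (real k) / real k) * \<tau>)\<bar> \<le> 1))"
proof -
  have K: "\<kappa> \<ge> 0" using lip by (simp add: lipschitz_on_def)
  have L: "\<bar>f (a,t) - f (b,t)\<bar> \<le> \<kappa> * \<bar>a - b\<bar>" for a b t
  proof -
    have "dist (f (a,t)) (f (b,t)) \<le> \<kappa> * dist (a,t) (b,t)" using lip by (simp add: lipschitz_on_def)
    then show ?thesis by (simp add: dist_Pair_Pair dist_real_def)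
  qed
  define B where "B = sup_norm f"
  have p1: "f (r + of_int z, t) = f (r, t)" for r t z
    using per_int[of "\<lambda>r. f (r, t)"] per1 by blast
  have p2: "f (r, t + of_int z) = f (r, t)" for r t z
    using per_int[of "\<lambda>t. f (r, t)"] per2 by blast
  have bnd: "\<bar>f p\<bar> \<le> \<bar>f (0,0)\<bar> + \<kappa> * 2" for p
  proof -
    obtain r t where p: "p = (r, t)" by (cases p)
    define r' where "r' = r - of_int \<lfloor>r\<rfloor>"
    define t' where "t' = t - of_int \<lfloor>t\<rfloor>"
    have r': "0 \<le> r'" "r' < 1" unfolding r'_def by linarith+
    have t': "0 \<le> t'" "t' < 1" unfolding t'_def by linarith+
    have "f p = f (r' + of_int \<lfloor>r\<rfloor>, t' + of_int \<lfloor>t\<rfloor>)" by (simp add: p r'_def t'_def)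
    also have "\<dots> = f (r', t')" by (simp add: p1 p2)
    finally have fp: "f p = f (r', t')" .
    have "dist (f (r', t')) (f (0,0)) \<le> \<kappa> * dist (r', t') (0,0)"
      using lip by (simp add: lipschitz_on_def)
    moreover have "dist (r', t') (0::real,0::real) \<le> 2"
    proof -
      have "dist (r', t') (0::real,0::real) = norm (r', t')" by (simp add: dist_norm)
      also have "\<dots> \<le> norm r' + norm t'" by (rule norm_Pair_le)
      also have "\<dots> \<le> 2" using r' t' by simp
      finally show ?thesis .
    qed
    ultimately have "dist (f (r', t')) (f (0,0)) \<le> \<kappa> * 2"
      using K by (meson mult_left_mono order_trans)
    then show ?thesis using fp by (simp add: dist_real_def)
  qed
  have Bd: "\<bar>f p\<bar> \<le> B" for p
    unfolding B_def sup_norm_def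
    by (rule cSUP_upper) (use bnd in \<open>auto intro!: bdd_aboveI2\<close>)
  have B0: "B \<ge> 0" using Bd[of 0] by simp
  note ctx = L K Bd per1 init ode
  define a where "a m = v 0 (real m)" for m :: nat
  define \<rho> where "\<rho> = lim (\<lambda>k::nat. v 0 (real k) / real k)"
  have \<rho>a: "\<rho> = lim (\<lambda>n. a n / real n)" by (simp add: \<rho>_def a_def)
  have Pn: "f (r, u + real k * real n) = f (r, u)" for r u k n
    using p2[of r u "int k * int n"] by simp
  have Q: "\<bar>real k * a m - a (k*m)\<bar> \<le> real k" for k m
    using v_M[OF ctx, of "real m" k 0] Pn by (simp add: a_def init)
  have a0: "a 0 = 0" by (simp add: a_def init)
  have R: "\<bar>a n - real n * \<rho>\<bar> \<le> 1" for n
    using rho_seq(2)[of a, OF a0 Q] \<rho>a by simp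
  have E3: "\<bar>\<rho>\<bar> \<le> B"
  proof (rule eps_le[where C=1])
    fix k :: nat assume k: "k \<ge> 1"
    have "\<bar>a k\<bar> \<le> B * real k" using v_lb[OF ctx, of 0 "real k" 0] by (simp add: a_def init)
    have "real k * \<bar>\<rho>\<bar> = \<bar>a k - (a k - real k * \<rho>)\<bar>" by (simp add: abs_mult)
    also have "\<dots> \<le> \<bar>a k\<bar> + \<bar>a k - real k * \<rho>\<bar>" by (rule abs_triangle_ineq4)
    also have "\<dots> \<le> real k * B + 1" using R[of k] \<open>\<bar>a k\<bar> \<le> B * real k\<close> by (simp add: mult.commute)
    finally have "real k * \<bar>\<rho>\<bar> \<le> real k * B + 1" .
    then have "real k * (\<bar>\<rho>\<bar> - B + 1) \<le> real k + 1" by (simp add: algebra_simps)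
    from divk[OF k this] show "\<bar>\<rho>\<bar> \<le> B + 1 / real k" by simp
  qed
  show ?thesis
  proof (intro conjI allI impI)
    fix \<tau> c :: real assume \<tau>: "\<tau> > 0"
    define n where "n = nat \<lfloor>\<tau>\<rfloor>"
    define s where "s = \<tau> - real n"
    have s: "0 \<le> s" "s \<le> 1" using \<tau> unfolding s_def n_def by linarith+
    have E1: "\<bar>v c \<tau> - v c (real n)\<bar> \<le> B * s" using v_lb[OF ctx, of c \<tau> "real n"] s by (simp add: s_def)
    have E2: "\<bar>v c (real n) - c - real n * \<rho>\<bar> \<le> 1"
    proof (rule eps_le[where C=1])
      fix k :: nat assume k: "k \<ge> 1"
      have "\<bar>real k * (v c (real n) - c) - v 0 (real k * real n)\<bar> \<le> real k"
        by (rule v_M[OF ctx]) (use Pn in auto)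
      moreover have "\<bar>a (k*n) - real (k*n) * \<rho>\<bar> \<le> 1" by (rule R)
      moreover have "real k * (v c (real n) - c - real n * \<rho>) = (real k * (v c (real n) - c) - v 0 (real k * real n)) + (a (k*n) - real (k*n) * \<rho>) - 0"
        by (simp add: a_def algebra_simps)
      ultimately have "\<bar>real k * (v c (real n) - c - real n * \<rho>)\<bar> \<le> real k + 1 + 0"
        by (intro tri3) auto
      then have "real k * \<bar>v c (real n) - c - real n * \<rho>\<bar> \<le> real k + 1" by (simp add: abs_mult)
      then show "\<bar>v c (real n) - c - real n * \<rho>\<bar> \<le> 1 + 1 / real k" by (rule divk[OF k])
    qed
    have "\<bar>s * \<rho>\<bar> \<le> s * B" using E3 s unfolding abs_mult by (simp add: mult_left_mono)
    moreover have "v c \<tau> - (c + \<rho> * \<tau>) = (v c \<tau> - v c (real n)) + (v c (real n) - c - real n * \<rho>) - s * \<rho>"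
      by (simp add: s_def algebra_simps)
    ultimately have "\<bar>v c \<tau> - (c + \<rho> * \<tau>)\<bar> \<le> B * s + 1 + s * B" using E1 E2 by (intro tri3) auto
    also have "\<dots> \<le> 1 + 2 * B" using mult_left_le_one_le[OF B0 s] by (simp add: mult.commute)
    finally show "\<bar>v c \<tau> - (c + lim (\<lambda>k::nat. v 0 (real k) / real k) * \<tau>)\<bar> \<le> 1 + 2 * sup_norm f"
      by (simp add: \<rho>_def B_def)
  next
    fix \<tau> c :: real assume A: "\<forall>r t s. f (r, t) = f (r, s)" and \<tau>: "\<tau> > 0"
    have PA: "f (r, u + x) = f (r, u)" for r u x using A by blast
    have "\<bar>v c \<tau> - c - \<tau> * \<rho>\<bar> \<le> 1"
    proof (rule eps_le[where C="2*B+1"])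
      fix k :: nat assume k: "k \<ge> 1"
      have M: "\<bar>real k * (v c \<tau> - c) - v 0 (real k * \<tau>)\<bar> \<le> real k"
        by (rule v_M[OF ctx]) (use PA \<tau> in auto)
      define N where "N = nat \<lfloor>real k * \<tau>\<rfloor>"
      define w where "w = real k * \<tau> - real N"
      have kt: "real k * \<tau> \<ge> 0" using \<tau> by simp
      have w: "0 \<le> w" "w \<le> 1" using kt unfolding w_def N_def by linarith+
      have W1: "\<bar>v 0 (real k * \<tau>) - v 0 (real N)\<bar> \<le> B * w"
        using v_lb[OF ctx, of 0 "real k * \<tau>" "real N"] w by (simp add: w_def)
      have W2: "\<bar>a N - real N * \<rho>\<bar> \<le> 1" by (rule R)
      have "\<bar>w * \<rho>\<bar> \<le> w * B" using E3 w unfolding abs_mult by (simp add: mult_left_mono)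
      also have "w * B \<le> B" by (rule mult_left_le_one_le[OF B0 w])
      finally have W3: "\<bar>w * \<rho>\<bar> \<le> B" .
      have "B * w \<le> B" using mult_left_le_one_le[OF B0 w] by (simp add: mult.commute)
      have "real k * (v c \<tau> - c - \<tau> * \<rho>) = (real k * (v c \<tau> - c) - v 0 (real k * \<tau>))
            + (v 0 (real k * \<tau>) - v 0 (real N)) + (a N - real N * \<rho>) - w * \<rho>"
        by (simp add: a_def w_def algebra_simps)
      then have "\<bar>real k * (v c \<tau> - c - \<tau> * \<rho>)\<bar> \<le> real k + B * w + 1 + B"
        using M W1 W2 W3 by (intro tri4) auto
      then have "real k * \<bar>v c \<tau> - c - \<tau> * \<rho>\<bar> \<le> real k + (2 * B + 1)"
        using \<open>B * w \<le> B\<close> by (simp add: abs_mult)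
      then show "\<bar>v c \<tau> - c - \<tau> * \<rho>\<bar> \<le> 1 + (2 * B + 1) / real k" by (rule divk[OF k])
    qed
    then show "\<bar>v c \<tau> - (c + lim (\<lambda>k::nat. v 0 (real k) / real k) * \<tau>)\<bar> \<le> 1"
      by (simp add: \<rho>_def algebra_simps)
  qed
qed

end
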